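(* Let $k>24$ be an integer. Then for every finite point set $\mathcal{P}\subset\mathbb{R}^2$, the overlapping Yao graph $\mathsf{OY}_k(\mathcal{P})$ is a geometric $\tau_k$-spanner, where $$\tau_k=\left(1-2\sin\Big(\frac{\pi}{k}+\frac{\pi}{8}\Big)\right)^{-1}.$$
   Context: Polar angles are measured from the positive $x$-axis, modulo $2\pi$. $C_u(\gamma_1,\gamma_2)$ denotes the set of points $w\neq u$ such that the polar angle of $\overrightarrow{uw}$ lies in $[\gamma_1,\gamma_2)$. Overlapping Yao graph $\mathsf{OY}_k(\mathcal{P})$: let $\gamma=\lceil k/4\rceil\cdot 2\pi/k$; for each $u\in\mathcal{P}$ and each $j=0,\dots,k-1$, among the points $v\in\mathcal{P}\cap C_u(2j\pi/k,\,2j\pi/k+\gamma)$ (if any) select one with $|uv|$ smallest and add the edge $\overrightarrow{uv}$ (ties broken arbitrarily but consistently). A graph $G$ with vertex set $\mathcal{P}$ (edges regarded as undirected with Euclidean lengths) is a geometric $t$-spanner if for all $u,v\in\mathcal{P}$ the shortest $u$-$v$ path in $G$ has length at most $t|uv|$. *)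

theory Defs
  imports "HOL-Analysis.Analysis"
begin

text \<open>Points of the plane are complex numbers. The polar angle of a nonzero
  vector, measured from the positive x-axis, normalised into [0, 2 pi).\<close>
definition polar_angle :: "complex \<Rightarrow> real" where
  "polar_angle z = (if Arg z < 0 then Arg z + 2 * pi else Arg z)"

definition in_cone :: "complex \<Rightarrow> real \<Rightarrow> real \<Rightarrow> complex \<Rightarrow> bool" where
  "in_cone u g1 g2 w \<longleftrightarrow> w \<noteq> u \<and>
     (\<exists>m::int. g1 \<le> polar_angle (w - u) + 2 * pi * of_int m \<and>
               polar_angle (w - u) + 2 * pi * of_int m < g2)"

definition oy_gamma :: "nat \<Rightarrow> real" where
  "oy_gamma k = of_int \<lceil>real k / 4\<rceil> * 2 * pi / real k"

definition oy_cone :: "nat \<Rightarrow> complex \<Rightarrow> nat \<Rightarrow> complex \<Rightarrow> bool" where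
  "oy_cone k u j w = in_cone u (2 * real j * pi / real k) (2 * real j * pi / real k + oy_gamma k) w"

text \<open>Ties may be broken by any fixed rule, i.e. by any such function sel.\<close>
definition is_OY_selection :: "nat \<Rightarrow> complex set \<Rightarrow> (complex \<Rightarrow> nat \<Rightarrow> complex option) \<Rightarrow> bool" where
  "is_OY_selection k P sel \<longleftrightarrow>
     (\<forall>u\<in>P. \<forall>j<k.
        (if \<exists>v\<in>P. oy_cone k u j v
         then (\<exists>v. sel u j = Some v \<and> v \<in> P \<and> oy_cone k u j v \<and>
                    (\<forall>w\<in>P. oy_cone k u j w \<longrightarrow> dist u v \<le> dist u w))
         else sel u j = None))"

definition OY_edges :: "nat \<Rightarrow> complex set \<Rightarrow> (complex \<Rightarrow> nat \<Rightarrow> complex option) \<Rightarrow> (complex \<times> complex) set" where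
  "OY_edges k P sel = {(u, v). u \<in> P \<and> (\<exists>j<k. sel u j = Some v)}"

definition path_length :: "complex list \<Rightarrow> real" where
  "path_length ps = sum_list (map (\<lambda>(a, b). dist a b) (zip ps (tl ps)))"

definition geometric_spanner :: "complex set \<Rightarrow> (complex \<times> complex) set \<Rightarrow> real \<Rightarrow> bool" where
  "geometric_spanner P E t \<longleftrightarrow>
     (\<forall>u\<in>P. \<forall>v\<in>P. \<exists>ps. ps \<noteq> [] \<and> hd ps = u \<and> last ps = v \<and> set ps \<subseteq> P \<and>
        (\<forall>i < length ps - 1. (ps ! i, ps ! Suc i) \<in> E \<or> (ps ! Suc i, ps ! i) \<in> E) \<and>
        path_length ps \<le> t * dist u v)"

end

theory Submission
  imports Defs
begin

lemma sgn_polar: "z \<noteq> 0 \<Longrightarrow> sgn z = cis (polar_angle z)"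
  by (simp add: polar_angle_def cis_Arg flip: cis_mult)

lemma polar_range: "0 \<le> polar_angle z \<and> polar_angle z < 2 * pi"
  using Arg_bounded[of z] by (auto simp: polar_angle_def)

lemma cis_diff_sq: "(norm (cis a - cis b))\<^sup>2 = 2 - 2 * cos (a - b)"
proof -
  have "(norm (cis a - cis b))\<^sup>2 = (cos a - cos b)\<^sup>2 + (sin a - sin b)\<^sup>2"
    by (simp add: cmod_power2)
  also have "\<dots> = (sin a ^2 + cos a ^2) + (sin b ^2 + cos b^2) - 2 * (cos a * cos b + sin a * sin b)"
    by (simp add: power2_eq_square algebra_simps)
  also have "\<dots> = 2 - 2 * cos (a - b)" by (simp add: cos_diff)
  finally show ?thesis .
qed

lemma cos_shift: "cos (x + 2 * pi * of_int n) = cos x"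
  by (simp add: cos_add)

lemma geo:
  fixes u v w :: complex and s :: real
  assumes "w \<noteq> u" "v \<noteq> u" "norm (w - u) \<le> norm (v - u)"
    and "norm (sgn (w - u) - sgn (v - u)) \<le> 2 * s"
  shows "dist w v \<le> dist u v - (1 - 2 * s) * dist u w"
proof -
  define a where "a = norm (v - u)"
  define b where "b = norm (w - u)"
  define e where "e = sgn (v - u)"
  have a0: "a > 0" using assms by (simp add: a_def)
  have b0: "b > 0" using assms by (simp add: b_def)
  have ne: "norm e = 1" using assms by (simp add: e_def norm_sgn)
  have ve: "v - u = of_real a * e" using a0 by (simp add: a_def e_def sgn_div_norm scaleR_conv_of_real field_simps)
  have we: "w - u = of_real b * sgn (w - u)" using b0 by (simp add: b_def sgn_div_norm scaleR_conv_of_real field_simps)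
  have "v - w = of_real (a - b) * e + of_real b * (e - sgn (w - u))"
  proof -
    have "v - w = (v - u) - (w - u)" by simp
    also have "\<dots> = of_real a * e - of_real b * sgn (w - u)" using ve we by simp
    finally show ?thesis by (simp add: algebra_simps)
  qed
  hence "norm (v - w) \<le> norm (of_real (a - b) * e) + norm (of_real b * (e - sgn (w - u)))"
    by (metis norm_triangle_ineq)
  also have "\<dots> = (a - b) + b * norm (sgn (w - u) - e)"
    using ne b0 assms(3) by (simp only: norm_mult norm_of_real a_def b_def) (simp add: norm_minus_commute)
  also have "\<dots> \<le> (a - b) + b * (2 * s)"
    using assms(4) b0 by (simp add: e_def)
  finally have "norm (v - w) \<le> a - b + b * (2 * s)" .
  thus ?thesis by (simp add: dist_norm a_def b_def norm_minus_commute algebra_simps)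
qed

lemma cone:
  fixes k :: nat and u v :: complex
  assumes k24: "k > 24" and vu: "v \<noteq> u"
  shows "\<exists>j<k. oy_cone k u j v \<and>
     (\<forall>w. oy_cone k u j w \<longrightarrow> norm (sgn (w - u) - sgn (v - u)) \<le> 2 * sin (pi / real k + pi / 8))"
proof -
  define K where "K = real k"
  define d where "d = pi / K"
  have K24: "K > 24" using k24 by (simp add: K_def)
  have d0: "d > 0" using K24 by (simp add: d_def)
  have Kd: "K * d = pi" using K24 by (simp add: d_def)
  have dsmall: "d < pi / 24" using K24 pi_gt_zero unfolding d_def by (simp add: field_simps)
  define C where "C = real_of_int \<lceil>K / 4\<rceil>"
  have C1: "K / 4 \<le> C" "C < K / 4 + 1" unfolding C_def using ceiling_correct[of "K/4"] by auto
  define g where "g = oy_gamma k"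
  have g_eq: "g = C * (2 * d)" by (simp add: g_def oy_gamma_def C_def K_def d_def)
  have "K / 4 * (2 * d) \<le> C * (2 * d)" using C1 d0 by (intro mult_right_mono) auto
  hence g1: "pi / 2 \<le> g" using Kd g_eq by (simp add: field_simps)
  have "C * (2 * d) \<le> (K / 4 + 1) * (2 * d)" using C1 d0 by (intro mult_right_mono) auto
  hence g2: "g \<le> pi / 2 + 2 * d" using Kd g_eq by (simp add: field_simps)
  define c where "c = g / 2"
  define th where "th = polar_angle (v - u)"
  define x where "x = (th - c) / (2 * d)"
  define J where "J = round x"
  have "\<bar>of_int J - x\<bar> \<le> 1/2" unfolding J_def by (rule of_int_round_abs_le)
  hence "\<bar>of_int J - x\<bar> * (2 * d) \<le> 1/2 * (2 * d)" using d0 by (intro mult_right_mono) auto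
  hence "\<bar>(of_int J - x) * (2 * d)\<bar> \<le> d" using d0 by (simp add: abs_mult)
  moreover have "(of_int J - x) * (2 * d) = 2 * d * of_int J - (th - c)"
    using d0 by (simp add: x_def field_simps)
  ultimately have Jb: "\<bar>2 * d * of_int J - (th - c)\<bar> \<le> d" by simp
  define j where "j = nat (J mod int k)"
  define q where "q = J div int k"
  have jk: "j < k" using k24 by (simp add: j_def nat_less_iff)
  have Jjq: "J = int j + int k * q" using k24 by (simp add: j_def q_def)
  have "real_of_int J = real j + K * real_of_int q" unfolding K_def
    by (metis Jjq of_int_add of_int_mult of_int_of_nat_eq)
  hence JJ: "2 * d * of_int J = 2 * d * real j + 2 * pi * of_int q"
    using Kd by (simp add: algebra_simps)
  have g1j: "2 * real j * pi / real k = 2 * d * real j" by (simp add: d_def K_def)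
  define off where "off = th - 2 * pi * of_int q - 2 * d * real j"
  have ob: "c - d \<le> off" "off \<le> c + d" using Jb JJ by (auto simp: off_def)
  have vcone: "oy_cone k u j v"
    unfolding oy_cone_def in_cone_def g_def[symmetric] g1j
  proof (intro conjI exI[of _ "- q"])
    show "v \<noteq> u" by fact
    show "2 * d * real j \<le> polar_angle (v - u) + 2 * pi * real_of_int (- q)"
      using ob g1 dsmall by (simp add: off_def th_def c_def)
    show "polar_angle (v - u) + 2 * pi * real_of_int (- q) < 2 * d * real j + g"
      using ob g1 dsmall by (simp add: off_def th_def c_def)
  qed
  define s where "s = sin (pi / real k + pi / 8)"
  define al where "al = 2 * (pi / real k + pi / 8)"
  have al_eq: "al = pi / 4 + 2 * d" by (simp add: al_def d_def K_def)
  have "pi / real k = d" by (simp add: d_def K_def)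
  hence s0: "s \<ge> 0" unfolding s_def using d0 dsmall
    by (intro sin_ge_zero) auto
  have "\<forall>w. oy_cone k u j w \<longrightarrow> norm (sgn (w - u) - sgn (v - u)) \<le> 2 * s"
  proof (intro allI impI)
    fix w assume "oy_cone k u j w"
    then obtain m :: int where wu: "w \<noteq> u"
      and m1: "2 * d * real j \<le> polar_angle (w - u) + 2 * pi * of_int m"
      and m2: "polar_angle (w - u) + 2 * pi * of_int m < 2 * d * real j + g"
      unfolding oy_cone_def in_cone_def g_def[symmetric] g1j by auto
    define a where "a = polar_angle (w - u) + 2 * pi * of_int m"
    define b where "b = th - 2 * pi * of_int q"
    have ab: "\<bar>a - b\<bar> \<le> al" using m1 m2 ob g2 al_eq
      by (auto simp: a_def b_def off_def c_def)
    have al_pi: "al \<le> pi" using al_eq dsmall pi_gt_zero by linarith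
    have "cos al \<le> cos \<bar>a - b\<bar>"
      using ab al_pi by (subst cos_mono_le_eq) auto
    hence cab: "cos al \<le> cos (a - b)" by (simp only: cos_abs_real)
    have "polar_angle (w - u) - th = (a - b) + 2 * pi * of_int (- m - q)"
      by (simp add: a_def b_def algebra_simps)
    hence "cos (polar_angle (w - u) - th) = cos (a - b)" by (simp only: cos_shift)
    moreover have "sgn (w - u) = cis (polar_angle (w - u))" using wu by (simp add: sgn_polar)
    moreover have "sgn (v - u) = cis th" using vu by (simp add: sgn_polar th_def)
    ultimately have "(norm (sgn (w - u) - sgn (v - u)))\<^sup>2 = 2 - 2 * cos (a - b)"
      by (simp add: cis_diff_sq)
    also have "\<dots> \<le> 2 - 2 * cos al" using cab by simp
    also have "\<dots> = (2 * s)\<^sup>2"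
    proof -
      have "cos al = 1 - 2 * s ^ 2" unfolding al_def s_def by (rule cos_double_sin)
      thus ?thesis by (simp add: power_mult_distrib)
    qed
    finally have sq: "(norm (sgn (w - u) - sgn (v - u)))\<^sup>2 \<le> (2 * s)\<^sup>2" .
    show "norm (sgn (w - u) - sgn (v - u)) \<le> 2 * s"
      by (rule power2_le_imp_le[OF sq]) (use s0 in simp)
  qed
  thus ?thesis using jk vcone unfolding s_def by blast
qed


theorem lemma8:
  fixes k :: nat and P :: "complex set" and sel :: "complex \<Rightarrow> nat \<Rightarrow> complex option"
  assumes "k > 24" and "finite P" and "is_OY_selection k P sel"
  shows "geometric_spanner P (OY_edges k P sel) (1 / (1 - 2 * sin (pi / real k + pi / 8)))"
proof -
  define s where "s = sin (pi / real k + pi / 8)"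
  define t where "t = 1 / (1 - 2 * s)"
  define E where "E = OY_edges k P sel"
  have Kp: "real k > 24" using assms(1) by simp
  have dk: "pi / real k < pi / 24" using Kp pi_gt_zero by (simp add: field_simps)
  have dk0: "pi / real k > 0" using Kp by simp
  have "sin (pi / real k + pi / 8) < sin (pi / 6)"
  proof -
    have h: "pi / real k + pi / 8 < pi / 6" using dk by linarith
    show ?thesis using h dk0 pi_gt_zero by (subst sin_mono_less_eq) linarith+
  qed
  hence s12: "s < 1/2" by (simp add: s_def sin_30)
  have s0: "s > 0" unfolding s_def using dk dk0 by (intro sin_gt_zero) auto
  have t1: "t * (1 - 2 * s) = 1" using s12 by (simp add: t_def)
  have t0: "t > 0" using s12 by (simp add: t_def)
  define Q where "Q u v \<longleftrightarrow> (\<exists>ps. ps \<noteq> [] \<and> hd ps = u \<and> last ps = v \<and> set ps \<subseteq> P \<and>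
        (\<forall>i < length ps - 1. (ps ! i, ps ! Suc i) \<in> E \<or> (ps ! Suc i, ps ! i) \<in> E) \<and>
        path_length ps \<le> t * dist u v)" for u v
  have main: "Q u v" if "u \<in> P" "v \<in> P" for u v
    using that(1)
  proof (induction "card {x\<in>P. dist x v < dist u v}" arbitrary: u rule: less_induct)
    case (less u)
    show ?case
    proof (cases "u = v")
      case True
      show ?thesis unfolding Q_def
        by (rule exI[of _ "[v]"]) (use True \<open>v \<in> P\<close> in \<open>simp add: path_length_def\<close>)
    next
      case False
      hence vu: "v \<noteq> u" by simp
      obtain j where jk: "j < k" and vc: "oy_cone k u j v"
        and jw: "\<forall>w. oy_cone k u j w \<longrightarrow> norm (sgn (w - u) - sgn (v - u)) \<le> 2 * s"
        using cone[OF assms(1) vu] unfolding s_def by blast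
      have "\<exists>v\<in>P. oy_cone k u j v" using vc \<open>v \<in> P\<close> by blast
      then obtain w where sw: "sel u j = Some w" and wP: "w \<in> P" and wc: "oy_cone k u j w"
        and wmin: "\<forall>w'\<in>P. oy_cone k u j w' \<longrightarrow> dist u w \<le> dist u w'"
        using assms(3) less.prems jk unfolding is_OY_selection_def by (metis (no_types, lifting))
      have wu: "w \<noteq> u" using wc by (simp add: oy_cone_def in_cone_def)
      have duw: "dist u w \<le> dist u v" using wmin vc \<open>v \<in> P\<close> by blast
      have nle: "norm (w - u) \<le> norm (v - u)" using duw by (simp add: dist_norm norm_minus_commute)
      have g: "dist w v \<le> dist u v - (1 - 2 * s) * dist u w"
        using geo[OF wu vu nle jw[rule_format, OF wc]] .
      have duw0: "dist u w > 0" using wu by simp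
      have "(1 - 2 * s) * dist u w > 0" using s12 duw0 by simp
      hence lt: "dist w v < dist u v" using g by linarith
      have sub: "{x\<in>P. dist x v < dist w v} \<subset> {x\<in>P. dist x v < dist u v}"
        using lt wP by auto
      have "card {x\<in>P. dist x v < dist w v} < card {x\<in>P. dist x v < dist u v}"
        by (rule psubset_card_mono) (use assms(2) sub in auto)
      from less.hyps[OF this wP] obtain ps where ps: "ps \<noteq> []" "hd ps = w" "last ps = v"
        "set ps \<subseteq> P" and pse: "\<forall>i < length ps - 1. (ps ! i, ps ! Suc i) \<in> E \<or> (ps ! Suc i, ps ! i) \<in> E"
        and psl: "path_length ps \<le> t * dist w v" unfolding Q_def by blast
      obtain rest where psr: "ps = w # rest" using ps(1,2) by (cases ps) auto
      have uwE: "(u, w) \<in> E" using less.prems jk sw by (auto simp: E_def OY_edges_def)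
      have pl: "path_length (u # ps) = dist u w + path_length ps"
        by (simp add: psr path_length_def)
      have "path_length (u # ps) \<le> dist u w + t * dist w v" using pl psl by simp
      also have "\<dots> \<le> dist u w + t * (dist u v - (1 - 2 * s) * dist u w)"
        using g t0 by (intro add_left_mono mult_left_mono) auto
      also have "\<dots> = t * dist u v - (t * (1 - 2 * s) - 1) * dist u w" by (simp add: algebra_simps)
      also have "\<dots> = t * dist u v" using t1 by simp
      finally have len: "path_length (u # ps) \<le> t * dist u v" .
      have edges: "\<forall>i < length (u # ps) - 1. ((u # ps) ! i, (u # ps) ! Suc i) \<in> E \<or> ((u # ps) ! Suc i, (u # ps) ! i) \<in> E"
      proof (intro allI impI)
        fix i assume i: "i < length (u # ps) - 1"
        show "((u # ps) ! i, (u # ps) ! Suc i) \<in> E \<or> ((u # ps) ! Suc i, (u # ps) ! i) \<in> E"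
        proof (cases i)
          case 0
          thus ?thesis using uwE psr by simp
        next
          case (Suc i')
          have "i' < length ps - 1" using i Suc psr by simp
          thus ?thesis using pse Suc by simp
        qed
      qed
      show ?thesis unfolding Q_def
        by (rule exI[of _ "u # ps"]) (use ps less.prems len edges in auto)
    qed
  qed
  show ?thesis unfolding geometric_spanner_def s_def[symmetric] t_def[symmetric] E_def[symmetric]
    using main unfolding Q_def by blast
qed

end
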